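(* Let $a,b,d,f,c\in\mathbb{C}$ with $|af|\neq|bd|$, and let $M=\max\{M_1,M_2\}$ where, with $\Delta=|af|-|bd|$, $K_1=\left(\frac{|b|+|f|}{|\Delta|}\right)^2$, $K_2=\left(\frac{|a|+|d|}{|\Delta|}\right)^2$, $M_1=K_1+\sqrt{K_1(K_1+|c|)}$, $M_2=K_2+\sqrt{K_2(K_2+|c|)}$. Then $M$ is an escape radius for the system: for any orbit $(z_1(n),z_2(n))$ of the system, if $\max\{|z_1(n_0)|,|z_2(n_0)|\}>M$ for some $n_0\ge0$, then $\max\{|z_1(n)|,|z_2(n)|\}\to\infty$ as $n\to\infty$ (indeed $\max\{|z_1(n_0+k)|,|z_2(n_0+k)|\}>2^kM$ for all $k\ge0$).
   Context: The 2D coupled quadratic system with connectivity matrix $A=\begin{pmatrix}a&b\\ d&f\end{pmatrix}$ and parameter $c\in\mathbb{C}$ is the iteration $z_1(n+1)=(az_1(n)+bz_2(n))^2+c$, $z_2(n+1)=(dz_1(n)+fz_2(n))^2+c$, $n\ge 0$, from an initial condition $(z_1(0),z_2(0))\in\mathbb{C}^2$. *)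

theory Defs
  imports "HOL-Analysis.Analysis"
begin

definition cq_step :: "complex \<Rightarrow> complex \<Rightarrow> complex \<Rightarrow> complex \<Rightarrow> complex
    \<Rightarrow> complex \<times> complex \<Rightarrow> complex \<times> complex" where
  "cq_step a b d f c z =
     ((a * fst z + b * snd z)^2 + c, (d * fst z + f * snd z)^2 + c)"

definition cq_orbit :: "complex \<Rightarrow> complex \<Rightarrow> complex \<Rightarrow> complex \<Rightarrow> complex
    \<Rightarrow> complex \<times> complex \<Rightarrow> nat \<Rightarrow> complex \<times> complex" where
  "cq_orbit a b d f c z0 n = (cq_step a b d f c ^^ n) z0"

definition cq_radius :: "complex \<Rightarrow> complex \<Rightarrow> complex \<Rightarrow> complex \<Rightarrow> complex \<Rightarrow> real" where
  "cq_radius a b d f c =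
     (let \<Delta> = cmod a * cmod f - cmod b * cmod d;
          K1 = ((cmod b + cmod f) / \<bar>\<Delta>\<bar>)^2;
          K2 = ((cmod a + cmod d) / \<bar>\<Delta>\<bar>)^2;
          M1 = K1 + sqrt (K1 * (K1 + cmod c));
          M2 = K2 + sqrt (K2 * (K2 + cmod c))
      in max M1 M2)"

end

theory Submission
  imports Defs
begin

lemma key_real:
  fixes K m c :: real
  assumes "K > 0" "c \<ge> 0" "m > K + sqrt (K*(K+c))"
  shows "m^2 > 2*K*m + K*c"
proof -
  have kk: "K*(K+c) \<ge> 0" using assms by (intro mult_nonneg_nonneg) auto
  have s0: "sqrt (K*(K+c)) \<ge> 0" using kk by simp
  have s: "(sqrt (K*(K+c)))^2 = K*(K+c)" using kk by simp
  have "(sqrt (K*(K+c)))^2 < (m-K)^2"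
    using assms s0 by (intro power_strict_mono) auto
  then show ?thesis using s by (simp add: power2_eq_square algebra_simps)
qed

lemma bound1:
  fixes a b d f z1 z2 :: complex
  assumes "\<bar>cmod a * cmod f - cmod b * cmod d\<bar> > 0"
  shows "cmod z1 * \<bar>cmod a * cmod f - cmod b * cmod d\<bar>
     \<le> (cmod b + cmod f) * max (cmod (a*z1+b*z2)) (cmod (d*z1+f*z2))"
    and "cmod z2 * \<bar>cmod a * cmod f - cmod b * cmod d\<bar>
     \<le> (cmod a + cmod d) * max (cmod (a*z1+b*z2)) (cmod (d*z1+f*z2))"
proof -
  let ?W = "max (cmod (a*z1+b*z2)) (cmod (d*z1+f*z2))"
  have det: "\<bar>cmod a * cmod f - cmod b * cmod d\<bar> \<le> cmod (a*f - b*d)"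
  proof -
    have "\<bar>cmod (a*f) - cmod (b*d)\<bar> \<le> cmod (a*f - b*d)" by (rule norm_triangle_ineq3)
    thus ?thesis by (simp add: norm_mult)
  qed
  have e1: "(a*f-b*d)*z1 = f*(a*z1+b*z2) - b*(d*z1+f*z2)" by (simp add: algebra_simps)
  have e2: "(a*f-b*d)*z2 = a*(d*z1+f*z2) - d*(a*z1+b*z2)" by (simp add: algebra_simps)
  have "cmod z1 * \<bar>cmod a * cmod f - cmod b * cmod d\<bar> \<le> cmod z1 * cmod (a*f-b*d)"
    using det by (simp add: mult_left_mono)
  also have "\<dots> = cmod (f*(a*z1+b*z2) - b*(d*z1+f*z2))" by (simp add: e1[symmetric] norm_mult mult.commute)
  also have "\<dots> \<le> cmod f * cmod (a*z1+b*z2) + cmod b * cmod (d*z1+f*z2)"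
    by (metis norm_mult norm_triangle_ineq4)
  also have "\<dots> \<le> cmod f * ?W + cmod b * ?W"
    by (intro add_mono mult_left_mono) auto
  finally show "cmod z1 * \<bar>cmod a * cmod f - cmod b * cmod d\<bar> \<le> (cmod b + cmod f) * ?W"
    by (simp add: algebra_simps)
  have "cmod z2 * \<bar>cmod a * cmod f - cmod b * cmod d\<bar> \<le> cmod z2 * cmod (a*f-b*d)"
    using det by (simp add: mult_left_mono)
  also have "\<dots> = cmod (a*(d*z1+f*z2) - d*(a*z1+b*z2))" by (simp add: e2[symmetric] norm_mult mult.commute)
  also have "\<dots> \<le> cmod a * cmod (d*z1+f*z2) + cmod d * cmod (a*z1+b*z2)"
    by (metis norm_mult norm_triangle_ineq4)
  also have "\<dots> \<le> cmod a * ?W + cmod d * ?W"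
    by (intro add_mono mult_left_mono) auto
  finally show "cmod z2 * \<bar>cmod a * cmod f - cmod b * cmod d\<bar> \<le> (cmod a + cmod d) * ?W"
    by (simp add: algebra_simps)
qed

lemma sq_bound:
  fixes x D B W :: real
  assumes "x * D \<le> B * W" "D > 0" "x \<ge> 0" "B \<ge> 0" "W \<ge> 0"
  shows "x^2 \<le> (B/D)^2 * W^2"
proof -
  have "x \<le> (B/D) * W" using assms by (simp add: field_simps)
  hence "x^2 \<le> ((B/D)*W)^2" using assms by (intro power_mono) auto
  moreover have "((B/D)*W)^2 = (B/D)^2*W^2" by (rule power_mult_distrib)
  ultimately show ?thesis by simp
qed

lemma step_lemma:
  fixes a b d f c :: complex and z :: "complex \<times> complex"
  assumes "cmod (a * f) \<noteq> cmod (b * d)"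
    and "max (cmod (fst z)) (cmod (snd z)) > cq_radius a b d f c"
  shows "max (cmod (fst (cq_step a b d f c z))) (cmod (snd (cq_step a b d f c z)))
         > 2 * max (cmod (fst z)) (cmod (snd z))"
proof -
  obtain z1 z2 where z: "z = (z1, z2)" by (cases z)
  define D where "D = \<bar>cmod a * cmod f - cmod b * cmod d\<bar>"
  define K1 where "K1 = ((cmod b + cmod f) / D)^2"
  define K2 where "K2 = ((cmod a + cmod d) / D)^2"
  define K where "K = max K1 K2"
  define m where "m = max (cmod z1) (cmod z2)"
  define W where "W = max (cmod (a*z1+b*z2)) (cmod (d*z1+f*z2))"
  have Dpos: "D > 0" using assms(1) by (auto simp: D_def norm_mult)
  have K1pos: "K1 > 0"
  proof -
    have "cmod b + cmod f \<noteq> 0"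
    proof
      assume "cmod b + cmod f = 0"
      hence "cmod b = 0" "cmod f = 0" using norm_ge_zero[of b] norm_ge_zero[of f] by linarith+
      hence "b = 0" "f = 0" by simp_all
      thus False using assms(1) by simp
    qed
    thus ?thesis using Dpos by (simp add: K1_def)
  qed
  have K2pos: "K2 > 0"
  proof -
    have "cmod a + cmod d \<noteq> 0"
    proof
      assume "cmod a + cmod d = 0"
      hence "cmod a = 0" "cmod d = 0" using norm_ge_zero[of a] norm_ge_zero[of d] by linarith+
      hence "a = 0" "d = 0" by simp_all
      thus False using assms(1) by simp
    qed
    thus ?thesis using Dpos by (simp add: K2_def)
  qed
  have Kpos: "K > 0" using K1pos by (simp add: K_def)
  have W0: "W \<ge> 0" by (simp add: W_def le_max_iff_disj)
  have b1: "(cmod z1)^2 \<le> K1 * W^2"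
    unfolding K1_def W_def
    by (rule sq_bound) (use bound1(1)[of a f b d z1 z2] Dpos in \<open>auto simp: D_def le_max_iff_disj\<close>)
  have b2: "(cmod z2)^2 \<le> K2 * W^2"
    unfolding K2_def W_def
    by (rule sq_bound) (use bound1(2)[of a f b d z2 z1] Dpos in \<open>auto simp: D_def le_max_iff_disj\<close>)
  have W2: "W^2 \<ge> 0" by simp
  have mK: "m^2 \<le> K * W^2"
  proof (cases "cmod z1 \<le> cmod z2")
    case True
    hence "m = cmod z2" by (simp add: m_def)
    moreover have "K2 * W^2 \<le> K * W^2" using W2 by (intro mult_right_mono) (auto simp: K_def)
    ultimately show ?thesis using b2 by simp
  next
    case False
    hence "m = cmod z1" by (simp add: m_def)
    moreover have "K1 * W^2 \<le> K * W^2" using W2 by (intro mult_right_mono) (auto simp: K_def)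
    ultimately show ?thesis using b1 by simp
  qed
  have rad: "cq_radius a b d f c = max (K1 + sqrt (K1 * (K1 + cmod c))) (K2 + sqrt (K2 * (K2 + cmod c)))"
    by (simp add: cq_radius_def Let_def K1_def K2_def D_def)
  have mM: "m > K + sqrt (K * (K + cmod c))"
  proof -
    have "m > cq_radius a b d f c" using assms(2) by (simp add: z m_def)
    thus ?thesis unfolding rad K_def by (cases "K1 \<le> K2") (auto simp: max_def split: if_splits)
  qed
  have km: "m^2 > 2*K*m + K*cmod c" by (rule key_real[OF Kpos _ mM]) simp
  have "K * W^2 > K * (2*m + cmod c)" using km mK by (simp add: algebra_simps)
  hence Wb: "W^2 > 2*m + cmod c" using Kpos by simp
  have lb: "cmod (w^2 + c) \<ge> (cmod w)^2 - cmod c" for w :: complex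
  proof -
    have "cmod (w^2) \<le> cmod (w^2 + c) + cmod c" by (metis add_diff_cancel norm_triangle_ineq4 diff_conv_add_uminus norm_minus_cancel norm_triangle_ineq)
    thus ?thesis by (simp add: norm_power)
  qed
  have "max (cmod ((a*z1+b*z2)^2 + c)) (cmod ((d*z1+f*z2)^2 + c)) \<ge> W^2 - cmod c"
  proof (cases "cmod (a*z1+b*z2) \<le> cmod (d*z1+f*z2)")
    case True
    hence "W = cmod (d*z1+f*z2)" by (simp add: W_def)
    thus ?thesis using lb[of "d*z1+f*z2"] by auto
  next
    case False
    hence "W = cmod (a*z1+b*z2)" by (simp add: W_def)
    thus ?thesis using lb[of "a*z1+b*z2"] by auto
  qed
  thus ?thesis using Wb by (simp add: z cq_step_def m_def)
qed

theorem mainTheorem2: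
  fixes a b d f c :: complex and z0 :: "complex \<times> complex" and n0 :: nat
  assumes "cmod (a * f) \<noteq> cmod (b * d)"
    and "max (cmod (fst (cq_orbit a b d f c z0 n0))) (cmod (snd (cq_orbit a b d f c z0 n0)))
           > cq_radius a b d f c"
  shows "filterlim (\<lambda>n. max (cmod (fst (cq_orbit a b d f c z0 n))) (cmod (snd (cq_orbit a b d f c z0 n))))
           at_top sequentially \<and>
         (\<forall>k. max (cmod (fst (cq_orbit a b d f c z0 (n0 + k)))) (cmod (snd (cq_orbit a b d f c z0 (n0 + k))))
           > 2 ^ k * cq_radius a b d f c)"
proof -
  define g where "g = (\<lambda>n. max (cmod (fst (cq_orbit a b d f c z0 n))) (cmod (snd (cq_orbit a b d f c z0 n))))"
  define M where "M = cq_radius a b d f c"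
  have orb: "cq_orbit a b d f c z0 (Suc n) = cq_step a b d f c (cq_orbit a b d f c z0 n)" for n
    by (simp add: cq_orbit_def)
  have M0: "M \<ge> 0"
    by (simp add: M_def cq_radius_def Let_def max_def)
  have main: "g (n0 + k) \<ge> 2^k * g n0 \<and> g (n0 + k) > M" for k
  proof (induction k)
    case 0
    then show ?case using assms(2) by (simp add: g_def M_def)
  next
    case (Suc k)
    have "g (n0 + Suc k) > 2 * g (n0 + k)"
      unfolding g_def add_Suc_right orb
      by (rule step_lemma[OF assms(1)]) (use Suc in \<open>simp add: g_def M_def\<close>)
    moreover have "g (n0+k) \<ge> 0" by (simp add: g_def le_max_iff_disj)
    ultimately show ?case using Suc M0 by auto
  qed
  have gpos: "g n0 > 0" using main[of 0] M0 by simp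
  have part2: "\<forall>k. g (n0 + k) > 2^k * M"
  proof
    fix k
    have "2^k * M < 2^k * g n0" using main[of 0] by simp
    thus "g (n0 + k) > 2^k * M" using main[of k] by linarith
  qed
  have lim1: "filterlim (\<lambda>k::nat. g n0 * 2^k) at_top sequentially"
    by (rule filterlim_tendsto_pos_mult_at_top[OF tendsto_const gpos])
      (rule filterlim_at_top_mono[OF filterlim_real_sequentially],
       rule always_eventually,
       metis less_exp less_imp_le of_nat_le_iff of_nat_numeral of_nat_power)
  have lim2: "filterlim (\<lambda>k::nat. 2^k * g n0) at_top sequentially"
    using lim1 by (simp add: mult.commute)
  have "filterlim (\<lambda>k. g (k + n0)) at_top sequentially"
    by (rule filterlim_at_top_mono[OF lim2]) (use main in \<open>simp add: add.commute\<close>)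
  hence "filterlim g at_top sequentially"
    unfolding filterlim_at_top
  proof (intro allI)
    fix Z
    assume "\<forall>Z. \<forall>\<^sub>F k in sequentially. Z \<le> g (k + n0)"
    hence "\<forall>\<^sub>F k in sequentially. Z \<le> g (k + n0)" by blast
    thus "\<forall>\<^sub>F x in sequentially. Z \<le> g x"
      using eventually_sequentially_seg[of "\<lambda>n. Z \<le> g n" n0] by simp
  qed
  with part2 show ?thesis by (simp add: g_def M_def)
qed

end
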